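(* $MR(3) = 4$; that is, every extremal point of $\Gamma(3)$ has rank at most $4$, and there exists an extremal point of $\Gamma(3)$ of rank exactly $4$.
   Context: A state $\rho$ on $M_n(\mathbb{C}) \otimes M_n(\mathbb{C})$ is a marginal tracial state if $\rho(A\otimes I) = \mathrm{tr}(A)$ and $\rho(I \otimes B) = \mathrm{tr}(B)$ for all $A,B \in M_n(\mathbb{C})$, where $\mathrm{tr}$ is the normalized trace. $\Gamma(n)$ is the convex set of all marginal tracial states on $M_n(\mathbb{C}) \otimes M_n(\mathbb{C})$. For a state $\rho$, $\mathrm{rank}(\rho)$ is the rank of its density matrix. $MR(n)$ denotes the maximum of $\mathrm{rank}(\rho)$ over all extremal points $\rho$ of $\Gamma(n)$. *)

theory Defs
  imports "HOL-Analysis.Analysis" "HOL-Library.Numeral_Type"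
begin

text \<open>M_n(C) tensor M_n(C) is identified with M_{n^2}(C), indexed by pairs 'n \<times> 'n,
  and the tensor product of matrices is the Kronecker product.\<close>

definition kron :: "complex^'n^'n \<Rightarrow> complex^'n^'n \<Rightarrow> complex^('n\<times>'n)^('n\<times>'n)" where
  "kron A B = (\<chi> p q. A $ fst p $ fst q * B $ snd p $ snd q)"

definition ntr :: "complex^'n^'n \<Rightarrow> complex" where
  "ntr A = trace A / of_nat CARD('n)"

text \<open>Density matrices: Hermitian, positive semidefinite, trace one.
  A state rho corresponds to its density matrix D via rho(X) = trace (D ** X).\<close>
definition density_matrix :: "complex^'m^'m \<Rightarrow> bool" where
  "density_matrix D \<longleftrightarrow>
     (\<forall>i j. D $ j $ i = cnj (D $ i $ j)) \<and>
     (\<forall>x::complex^'m. 0 \<le> Re (\<Sum>i\<in>UNIV. \<Sum>j\<in>UNIV. cnj (x $ i) * D $ i $ j * x $ j)) \<and>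
     trace D = 1"

definition Gamma :: "(complex^('n::finite\<times>'n)^('n\<times>'n)) set" where
  "Gamma = {D. density_matrix D \<and>
     (\<forall>A::complex^'n^'n. trace (D ** kron A (mat 1)) = ntr A) \<and>
     (\<forall>B::complex^'n^'n. trace (D ** kron (mat 1) B) = ntr B)}"

end

theory Submission
  imports Defs
begin

definition qf :: "complex^'m^'m \<Rightarrow> complex^'m \<Rightarrow> complex^'m \<Rightarrow> complex" where
  "qf D x y = (\<Sum>i\<in>UNIV. \<Sum>j\<in>UNIV. cnj (x$i) * D$i$j * y$j)"

definition herm :: "complex^'m^'m \<Rightarrow> bool" where
  "herm D \<longleftrightarrow> (\<forall>i j. D $ j $ i = cnj (D $ i $ j))"

lemma herm_cnj: "herm D \<Longrightarrow> cnj (D$i$j) = D$j$i"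
  unfolding herm_def by (metis complex_cnj_cnj)

lemma mult_ind: "(a::complex) * (if P then 1 else 0) = (if P then a else 0)" by simp

lemma density_matrix_alt:
  "density_matrix D \<longleftrightarrow> herm D \<and> (\<forall>x. 0 \<le> Re (qf D x x)) \<and> trace D = 1"
  by (simp add: density_matrix_def herm_def qf_def)

lemma qf_add_left: "qf D (x + y) z = qf D x z + qf D y z"
  by (simp add: qf_def algebra_simps sum.distrib)
lemma qf_add_right: "qf D z (x + y) = qf D z x + qf D z y"
  by (simp add: qf_def algebra_simps sum.distrib)
lemma qf_scale_left: "qf D (c *s x) z = cnj c * qf D x z"
  by (simp add: qf_def algebra_simps sum_distrib_left)
lemma qf_scale_right: "qf D z (c *s x) = c * qf D z x"
  by (simp add: qf_def algebra_simps sum_distrib_left)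

lemma qf_swap: assumes "herm D" shows "qf D y x = cnj (qf D x y)"
proof -
  have "qf D y x = (\<Sum>j\<in>UNIV. \<Sum>i\<in>UNIV. cnj (y$j) * D$j$i * x$i)" by (simp add: qf_def)
  also have "\<dots> = (\<Sum>i\<in>UNIV. \<Sum>j\<in>UNIV. cnj (y$j) * D$j$i * x$i)" by (rule sum.swap)
  also have "\<dots> = cnj (qf D x y)" using assms
    by (simp add: qf_def herm_cnj mult.commute mult.left_commute)
  finally show ?thesis .
qed

lemma qf_self_real: assumes "herm D" shows "Im (qf D x x) = 0"
  using qf_swap[OF assms, of x x] by (metis Im_complex_of_real Reals_cnj_iff complex_is_Real_iff)

lemma quad_disc:
  fixes a b c :: real
  assumes "a \<ge> 0" "c \<ge> 0" "\<And>t. 0 \<le> a + 2*b*t + c*t^2"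
  shows "b^2 \<le> a*c"
proof (cases "c > 0")
  case True
  have "0 \<le> a + 2*b*(-b/c) + c*(-b/c)^2" by (rule assms(3))
  also have "\<dots> = a - b^2/c" using True by (simp add: field_simps power2_eq_square)
  finally have "b^2/c \<le> a" by simp
  thus ?thesis using True by (simp add: divide_le_eq mult.commute)
next
  case False
  hence c0: "c = 0" using assms(2) by simp
  have "b = 0"
  proof (rule ccontr)
    assume "b \<noteq> 0"
    have "0 \<le> a + 2*b*(-(a+1)/(2*b)) + c*(-(a+1)/(2*b))^2" by (rule assms(3))
    also have "\<dots> = -1" using \<open>b\<noteq>0\<close> c0 by (simp add: field_simps)
    finally show False by simp
  qed
  thus ?thesis using assms by simp
qed

lemma cauchy_schwarz_qf:
  assumes h: "herm D" and psd: "\<And>x. 0 \<le> Re (qf D x x)"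
  shows "(cmod (qf D x y))^2 \<le> Re (qf D x x) * Re (qf D y y)"
proof (cases "qf D x y = 0")
  case True thus ?thesis using psd by simp
next
  case False
  define s where "s = qf D x y"
  define c where "c = cnj s / of_real (cmod s)"
  have sn: "cmod s > 0" using False s_def by simp
  have ss: "s * cnj s = of_real (cmod s) * of_real (cmod s)"
    using complex_norm_square[of s] by (simp add: power2_eq_square)
  have cs: "c * s = of_real (cmod s)"
    using sn ss by (simp add: c_def field_simps)
  have cc: "cnj c * c = 1"
    using sn ss by (simp add: c_def field_simps mult.commute)
  have "\<And>t::real. 0 \<le> Re (qf D x x) + 2 * cmod s * t + Re (qf D y y) * t^2"
  proof -
    fix t :: real
    define z where "z = (of_real t * c) *s y"
    have "0 \<le> Re (qf D (x + z) (x + z))" by (rule psd)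
    also have "qf D (x + z) (x + z) = qf D x x + qf D x z + cnj (qf D x z) + qf D z z"
      by (simp add: qf_add_left qf_add_right qf_swap[OF h, of z x])
    also have "qf D x z = of_real t * of_real (cmod s)"
      by (simp add: z_def qf_scale_right s_def[symmetric] cs[symmetric] mult.assoc)
    also have "qf D z z = of_real (t^2) * qf D y y"
      using cc by (simp add: z_def qf_scale_right qf_scale_left power2_eq_square algebra_simps)
    finally show "0 \<le> Re (qf D x x) + 2 * cmod s * t + Re (qf D y y) * t^2"
      by (simp add: algebra_simps)
  qed
  from quad_disc[OF psd psd this] show ?thesis by (simp add: s_def)
qed

lemma psd_kernel:
  assumes h: "herm D" and psd: "\<And>x. 0 \<le> Re (qf D x x)" and z: "Re (qf D x x) = 0"
  shows "D *v x = 0"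
proof -
  have "\<And>j. (D *v x) $ j = 0"
  proof -
    fix j
    have "(cmod (qf D x (axis j 1)))^2 \<le> 0"
      using cauchy_schwarz_qf[OF h psd, of x "axis j 1"] z by simp
    hence "qf D x (axis j 1) = 0" by simp
    moreover have "qf D x (axis j 1) = cnj ((D *v x) $ j)"
    proof -
      have "qf D x (axis j 1) = (\<Sum>i\<in>UNIV. cnj (x$i) * D$i$j)"
        unfolding qf_def by (rule sum.cong) (auto simp: axis_def mult_ind)
      also have "\<dots> = cnj ((D *v x) $ j)"
        using h by (simp add: matrix_vector_mult_def herm_cnj mult.commute)
      finally show ?thesis .
    qed
    ultimately show "(D *v x) $ j = 0" by simp
  qed
  thus ?thesis by (simp add: vec_eq_iff)
qed

definition ptr1 :: "complex^('n\<times>'n)^('n\<times>'n) \<Rightarrow> complex^'n^'n" where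
  "ptr1 H = (\<chi> a b. \<Sum>k\<in>UNIV. H$(a,k)$(b,k))"
definition ptr2 :: "complex^('n\<times>'n)^('n\<times>'n) \<Rightarrow> complex^'n^'n" where
  "ptr2 H = (\<chi> a b. \<Sum>k\<in>UNIV. H$(k,a)$(k,b))"

lemma sum_pair: "(\<Sum>p\<in>UNIV. f p) = (\<Sum>a\<in>UNIV. \<Sum>b\<in>UNIV. f (a,b))"
  by (simp add: UNIV_Times_UNIV[symmetric] sum.cartesian_product del: UNIV_Times_UNIV)

lemma sum_delta2: fixes k :: "'b::finite" shows "(\<Sum>l\<in>UNIV. \<Sum>b\<in>UNIV. (if l = k then f l b else (0::'a::comm_monoid_add))) = (\<Sum>b\<in>UNIV. f k b)"
proof -
  have "(\<Sum>l\<in>UNIV. \<Sum>b\<in>UNIV. (if l = k then f l b else (0::'a))) = (\<Sum>l\<in>UNIV. if l = k then (\<Sum>b\<in>UNIV. f l b) else 0)"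
    by (rule sum.cong) auto
  thus ?thesis by simp
qed

lemma trace_kron1:
  fixes H :: "complex^('n::finite\<times>'n)^('n\<times>'n)"
  shows "trace (H ** kron A (mat 1)) = (\<Sum>a\<in>UNIV. \<Sum>b\<in>UNIV. A$b$a * ptr1 H $a$b)"
proof -
  have "trace (H ** kron A (mat 1)) =
     (\<Sum>a\<in>UNIV. \<Sum>k\<in>UNIV. \<Sum>b\<in>UNIV. \<Sum>l\<in>UNIV. H$(a,k)$(b,l) * (A$b$a * (if l = k then 1 else 0)))"
    unfolding trace_def matrix_matrix_mult_def kron_def mat_def
    apply (simp only: vec_lambda_beta)
    apply (subst sum_pair)
    apply (subst sum_pair)
    apply simp
    done
  also have "\<dots> = (\<Sum>a\<in>UNIV. \<Sum>k\<in>UNIV. \<Sum>b\<in>UNIV. H$(a,k)$(b,k) * A$b$a)"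
    by (simp add: mult_ind if_distrib cong: if_cong)
  also have "\<dots> = (\<Sum>a\<in>UNIV. \<Sum>b\<in>UNIV. \<Sum>k\<in>UNIV. H$(a,k)$(b,k) * A$b$a)"
    by (rule sum.cong[OF refl], rule sum.swap)
  also have "\<dots> = (\<Sum>a\<in>UNIV. \<Sum>b\<in>UNIV. A$b$a * ptr1 H $a$b)"
    by (simp add: ptr1_def sum_distrib_left mult.commute)
  finally show ?thesis .
qed

lemma trace_kron2:
  fixes H :: "complex^('n::finite\<times>'n)^('n\<times>'n)"
  shows "trace (H ** kron (mat 1) B) = (\<Sum>a\<in>UNIV. \<Sum>b\<in>UNIV. B$b$a * ptr2 H $a$b)"
proof -
  have "trace (H ** kron (mat 1) B) =
     (\<Sum>k\<in>UNIV. \<Sum>a\<in>UNIV. \<Sum>l\<in>UNIV. \<Sum>b\<in>UNIV. H$(k,a)$(l,b) * ((if l = k then 1 else 0) * B$b$a))"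
    unfolding trace_def matrix_matrix_mult_def kron_def mat_def
    apply (simp only: vec_lambda_beta)
    apply (subst sum_pair)
    apply (subst sum_pair)
    apply simp
    done
  also have "\<dots> = (\<Sum>k\<in>UNIV. \<Sum>a\<in>UNIV. \<Sum>b\<in>UNIV. H$(k,a)$(k,b) * B$b$a)"
  proof -
    have eq: "\<And>k a l b. H$(k,a)$(l,b) * ((if l = k then 1 else 0) * B$b$a) = (if l = k then H$(k,a)$(k,b) * B$b$a else 0)"
      by simp
    show ?thesis by (simp only: eq sum_delta2)
  qed
  also have "\<dots> = (\<Sum>a\<in>UNIV. \<Sum>k\<in>UNIV. \<Sum>b\<in>UNIV. H$(k,a)$(k,b) * B$b$a)"
    by (rule sum.swap)
  also have "\<dots> = (\<Sum>a\<in>UNIV. \<Sum>b\<in>UNIV. \<Sum>k\<in>UNIV. H$(k,a)$(k,b) * B$b$a)"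
    by (rule sum.cong[OF refl], rule sum.swap)
  also have "\<dots> = (\<Sum>a\<in>UNIV. \<Sum>b\<in>UNIV. B$b$a * ptr2 H $a$b)"
    by (simp add: ptr2_def sum_distrib_left mult.commute)
  finally show ?thesis .
qed

lemma trace_ptr1: "trace (H::complex^('n::finite\<times>'n)^('n\<times>'n)) = (\<Sum>a\<in>UNIV. ptr1 H $a$a)"
  unfolding trace_def ptr1_def
  apply (simp only: vec_lambda_beta)
  apply (subst sum_pair)
  apply simp
  done

lemma cscale: "(r::real) *\<^sub>R (z::complex) = of_real r * z"
  by (simp add: scaleR_conv_of_real)

lemma qf_madd: "qf (D + H) x y = qf D x y + qf H x y"
  by (simp add: qf_def algebra_simps sum.distrib)
lemma qf_mscale: "qf (c *\<^sub>R H) x y = of_real c * qf H x y"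
  by (simp add: qf_def algebra_simps sum_distrib_left cscale)

lemma trace_perturb: "trace ((D + c *\<^sub>R H) ** (X::complex^'n^'n)) = trace (D ** X) + of_real c * trace (H ** X)"
  by (simp add: trace_def matrix_matrix_mult_def algebra_simps sum.distrib sum_distrib_left cscale)

lemma trace_perturb0: "trace (D + c *\<^sub>R (H::complex^'n^'n)) = trace D + of_real c * trace H"
  by (simp add: trace_def algebra_simps sum.distrib sum_distrib_left cscale)

lemma herm_perturb: assumes "herm D" "herm H" shows "herm (D + c *\<^sub>R H)"
  using herm_cnj[OF assms(1)] herm_cnj[OF assms(2)] by (simp add: herm_def cscale)

lemma gamma_perturb:
  fixes D H :: "complex^('n::finite\<times>'n)^('n\<times>'n)"
  assumes D: "D \<in> Gamma" and hH: "herm H" and p1: "ptr1 H = 0" and p2: "ptr2 H = 0"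
    and bnd: "\<And>x. cmod (qf H x x) \<le> C * Re (qf D x x)" and c: "\<bar>c\<bar> * C \<le> 1"
  shows "D + c *\<^sub>R H \<in> Gamma"
proof -
  have dm: "herm D" "\<And>x. 0 \<le> Re (qf D x x)" "trace D = 1"
    using D by (auto simp: Gamma_def density_matrix_alt)
  have trH: "trace H = 0" using p1 by (simp add: trace_ptr1)
  have psd: "0 \<le> Re (qf (D + c *\<^sub>R H) x x)" for x
  proof -
    have q0: "0 \<le> Re (qf D x x)" by (rule dm(2))
    have "\<bar>c * Re (qf H x x)\<bar> \<le> \<bar>c\<bar> * cmod (qf H x x)"
      by (simp add: abs_mult abs_Re_le_cmod mult_left_mono)
    also have "\<dots> \<le> \<bar>c\<bar> * (C * Re (qf D x x))"
      by (rule mult_left_mono[OF bnd]) simp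
    also have "\<dots> = (\<bar>c\<bar> * C) * Re (qf D x x)" by simp
    also have "\<dots> \<le> 1 * Re (qf D x x)"
      by (rule mult_right_mono[OF c q0])
    finally have "\<bar>c * Re (qf H x x)\<bar> \<le> Re (qf D x x)" by simp
    thus ?thesis by (simp add: qf_madd qf_mscale)
  qed
  have k1: "trace ((D + c *\<^sub>R H) ** kron A (mat 1)) = ntr A" for A :: "complex^'n^'n"
    using D p1 by (simp add: trace_perturb Gamma_def trace_kron1[of H])
  have k2: "trace ((D + c *\<^sub>R H) ** kron (mat 1) B) = ntr B" for B :: "complex^'n^'n"
    using D p2 by (simp add: trace_perturb Gamma_def trace_kron2[of H])
  show ?thesis
    unfolding Gamma_def density_matrix_alt
    using herm_perturb[OF dm(1) hH] psd k1 k2 dm(3) trH by (simp add: trace_perturb0)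
qed

lemma not_extreme:
  fixes D H :: "complex^('n::finite\<times>'n)^('n\<times>'n)"
  assumes D: "D \<in> Gamma" and hH: "herm H" and H0: "H \<noteq> 0" and p1: "ptr1 H = 0" and p2: "ptr2 H = 0"
    and bnd: "\<And>x. cmod (qf H x x) \<le> C * Re (qf D x x)" and C: "C \<ge> 0"
  shows "\<not> D extreme_point_of Gamma"
proof
  assume ext: "D extreme_point_of Gamma"
  define c where "c = 1 / (C + 1)"
  have cpos: "c > 0" using C by (simp add: c_def)
  have cC: "\<bar>c\<bar> * C \<le> 1" "\<bar>-c\<bar> * C \<le> 1" using C by (auto simp: c_def field_simps)
  have g1: "D + c *\<^sub>R H \<in> Gamma" by (rule gamma_perturb[OF D hH p1 p2 bnd cC(1)])
  have g2: "D + (-c) *\<^sub>R H \<in> Gamma" by (rule gamma_perturb[OF D hH p1 p2 bnd cC(2)])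
  have ne: "D + c *\<^sub>R H \<noteq> D + (-c) *\<^sub>R H"
  proof
    assume eq: "D + c *\<^sub>R H = D + (-c) *\<^sub>R H"
    obtain i j where ij: "H$i$j \<noteq> 0" using H0 by (metis vec_eq_iff zero_index)
    have "D$i$j + of_real c * H$i$j = D$i$j + of_real (-c) * H$i$j"
      using arg_cong[OF eq, of "\<lambda>M. M$i$j"] by (simp add: cscale)
    hence "of_real (2*c) * H$i$j = 0" by (simp add: algebra_simps)
    thus False using cpos ij by simp
  qed
  have mid: "D = midpoint (D + c *\<^sub>R H) (D + (-c) *\<^sub>R H)"
    by (simp add: midpoint_def algebra_simps scaleR_2[symmetric])
  have "D \<in> open_segment (D + c *\<^sub>R H) (D + (-c) *\<^sub>R H)"
    using ne by (subst mid) simp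
  thus False using ext g1 g2 unfolding extreme_point_of_def by blast
qed

lemma rows_indep:
  fixes D :: "'a::field^'m::finite^'m"
  assumes "rank D \<ge> 5"
  obtains \<iota> :: "5 \<Rightarrow> 'm" where
    "\<And>c. (\<Sum>a\<in>UNIV. c a *s row (\<iota> a) D) = 0 \<Longrightarrow> (\<forall>a. c a = 0)"
proof -
  obtain B where B: "B \<subseteq> rows D" "vec.independent B" "rows D \<subseteq> vec.span B" "card B = vec.dim (rows D)"
    by (rule vec.basis_exists)
  have "rows D = range (\<lambda>i. row i D)" by (auto simp: rows_def)
  hence "finite (rows D)" by simp
  hence finB: "finite B" using B(1) finite_subset by blast
  have c5: "5 \<le> card B" using B(4) assms by (simp add: row_rank_def_gen)
  obtain B' where B': "B' \<subseteq> B" "card B' = 5" and finB': "finite B'"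
    by (rule obtain_subset_with_card_n[OF c5])
  have indB': "vec.independent B'" using B(2) B'(1) vec.independent_mono by blast
  have cc: "card (UNIV :: 5 set) = card B'" using B' by simp
  have "\<exists>h. bij_betw h (UNIV :: 5 set) B'"
    by (rule finite_same_card_bij[OF _ finB' cc]) simp
  then obtain f where f: "bij_betw f (UNIV :: 5 set) B'" by blast
  have ex: "\<exists>i. row i D = f a" for a
  proof -
    have "f a \<in> rows D" using f B'(1) B(1) by (auto simp: bij_betw_def)
    thus ?thesis by (auto simp: rows_def)
  qed
  define \<iota> where "\<iota> a = (SOME i. row i D = f a)" for a
  have rowi: "row (\<iota> a) D = f a" for a
    unfolding \<iota>_def by (rule someI_ex[OF ex])
  show ?thesis
  proof (rule that)
    fix c :: "5 \<Rightarrow> 'a"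
    assume sum0: "(\<Sum>a\<in>UNIV. c a *s row (\<iota> a) D) = 0"
    define u where "u v = c (inv_into UNIV f v)" for v
    have "(\<Sum>v\<in>B'. u v *s v) = (\<Sum>a\<in>UNIV. u (f a) *s f a)"
      by (rule sum.reindex_bij_betw[OF f, symmetric])
    also have "\<dots> = (\<Sum>a\<in>UNIV. c a *s row (\<iota> a) D)"
      using f by (simp add: u_def rowi bij_betw_inv_into_left)
    finally have "(\<Sum>v\<in>B'. u v *s v) = 0" using sum0 by simp
    hence "\<forall>v\<in>B'. u v = 0" using indB' vec.dependent_finite[OF finB'] by blast
    thus "\<forall>a. c a = 0"
      using f by (metis bij_betwE bij_betw_inv_into_left iso_tuple_UNIV_I u_def)
  qed
qed

definition kk :: "real^(5\<times>5) \<Rightarrow> 5 \<Rightarrow> 5 \<Rightarrow> complex" where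
  "kk R a b = of_real (R$(a,b) + R$(b,a)) + \<i> * of_real (R$(a,b) - R$(b,a))"

lemma kk_cnj: "cnj (kk R a b) = kk R b a"
  by (simp add: kk_def algebra_simps)
lemma kk_add: "kk (R + S) a b = kk R a b + kk S a b"
  by (simp add: kk_def algebra_simps)
lemma kk_scale: "kk (c *\<^sub>R R) a b = of_real c * kk R a b"
  by (simp add: kk_def algebra_simps)
lemma kk_zero: assumes "\<And>a b. kk R a b = 0" shows "R = 0"
proof -
  have "R$(a,b) = 0" for a b
  proof -
    have "Re (kk R a b) = 0" "Im (kk R a b) = 0" using assms by auto
    hence "R$(a,b) + R$(b,a) = 0" "R$(a,b) - R$(b,a) = 0" by (auto simp: kk_def)
    thus ?thesis by simp
  qed
  thus ?thesis by (simp add: vec_eq_iff)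
qed

definition HH :: "complex^'m^'m \<Rightarrow> (5 \<Rightarrow> 'm) \<Rightarrow> real^(5\<times>5) \<Rightarrow> complex^'m^'m" where
  "HH D \<iota> R = (\<chi> p q. \<Sum>a\<in>UNIV. \<Sum>b\<in>UNIV. D$p$(\<iota> a) * kk R a b * D$(\<iota> b)$q)"

lemma herm_HH: assumes "herm D" shows "herm (HH D \<iota> R)"
proof -
  have "HH D \<iota> R $ j $ i = cnj (HH D \<iota> R $ i $ j)" for i j
  proof -
    have "cnj (HH D \<iota> R $ i $ j) = (\<Sum>a\<in>UNIV. \<Sum>b\<in>UNIV. D$(\<iota> a)$i * kk R b a * D$j$(\<iota> b))"
      by (simp add: HH_def herm_cnj[OF assms] kk_cnj)
    also have "\<dots> = (\<Sum>b\<in>UNIV. \<Sum>a\<in>UNIV. D$(\<iota> a)$i * kk R b a * D$j$(\<iota> b))"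
      by (rule sum.swap)
    also have "\<dots> = HH D \<iota> R $ j $ i"
      unfolding HH_def vec_lambda_beta
      by (rule sum.cong[OF refl], rule sum.cong[OF refl]) (simp add: algebra_simps)
    finally show ?thesis by simp
  qed
  thus ?thesis unfolding herm_def by blast
qed

lemma HH_zero:
  fixes D :: "complex^'m::finite^'m"
  assumes h: "herm D" and ind: "\<And>c. (\<Sum>a\<in>UNIV. c a *s row (\<iota> a) D) = 0 \<Longrightarrow> (\<forall>a. c a = 0)"
    and z: "HH D \<iota> R = 0"
  shows "R = 0"
proof -
  have c1: "(\<Sum>a\<in>UNIV. D$p$(\<iota> a) * kk R a b) = 0" for p b
  proof -
    have "(\<Sum>b\<in>UNIV. (\<Sum>a\<in>UNIV. D$p$(\<iota> a) * kk R a b) *s row (\<iota> b) D) = row p (HH D \<iota> R)"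
    proof -
      have "(\<Sum>b\<in>UNIV. (\<Sum>a\<in>UNIV. D$p$(\<iota> a) * kk R a b) *s row (\<iota> b) D) $ q = row p (HH D \<iota> R) $ q" for q
      proof -
        have "(\<Sum>b\<in>UNIV. (\<Sum>a\<in>UNIV. D$p$(\<iota> a) * kk R a b) *s row (\<iota> b) D) $ q
            = (\<Sum>b\<in>UNIV. \<Sum>a\<in>UNIV. D$p$(\<iota> a) * kk R a b * D$(\<iota> b)$q)"
          by (simp add: sum_component row_def sum_distrib_right)
        also have "\<dots> = (\<Sum>a\<in>UNIV. \<Sum>b\<in>UNIV. D$p$(\<iota> a) * kk R a b * D$(\<iota> b)$q)"
          by (rule sum.swap)
        also have "\<dots> = row p (HH D \<iota> R) $ q" by (simp add: HH_def row_def)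
        finally show ?thesis .
      qed
      thus ?thesis by (simp add: vec_eq_iff)
    qed
    also have "\<dots> = 0" using z by (simp add: row_def vec_eq_iff)
    finally show ?thesis using ind[of "\<lambda>b. \<Sum>a\<in>UNIV. D$p$(\<iota> a) * kk R a b"] by blast
  qed
  have c2: "kk R b a = 0" for a b
  proof -
    have "(\<Sum>a\<in>UNIV. kk R b a *s row (\<iota> a) D) = 0"
    proof -
      have "(\<Sum>a\<in>UNIV. kk R b a *s row (\<iota> a) D) $ p = 0" for p
      proof -
        have "(\<Sum>a\<in>UNIV. kk R b a *s row (\<iota> a) D) $ p = (\<Sum>a\<in>UNIV. kk R b a * D$(\<iota> a)$p)"
          by (simp add: sum_component row_def)
        also have "\<dots> = cnj (\<Sum>a\<in>UNIV. D$p$(\<iota> a) * kk R a b)"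
          by (simp add: herm_cnj[OF h] kk_cnj mult.commute)
        also have "\<dots> = 0" using c1 by simp
        finally show ?thesis .
      qed
      thus ?thesis by (simp add: vec_eq_iff)
    qed
    thus ?thesis using ind[of "\<lambda>a. kk R b a"] by blast
  qed
  show ?thesis by (rule kk_zero) (rule c2)
qed

lemma swap4: "(\<Sum>a\<in>A. \<Sum>b\<in>B. \<Sum>p\<in>P. \<Sum>q\<in>Q. f a b p q) = (\<Sum>p\<in>P. \<Sum>q\<in>Q. \<Sum>a\<in>A. \<Sum>b\<in>B. f a b p q)"
proof -
  have "(\<Sum>a\<in>A. \<Sum>b\<in>B. \<Sum>p\<in>P. \<Sum>q\<in>Q. f a b p q) = (\<Sum>a\<in>A. \<Sum>p\<in>P. \<Sum>b\<in>B. \<Sum>q\<in>Q. f a b p q)"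
    by (rule sum.cong[OF refl], rule sum.swap)
  also have "\<dots> = (\<Sum>p\<in>P. \<Sum>a\<in>A. \<Sum>b\<in>B. \<Sum>q\<in>Q. f a b p q)" by (rule sum.swap)
  also have "\<dots> = (\<Sum>p\<in>P. \<Sum>a\<in>A. \<Sum>q\<in>Q. \<Sum>b\<in>B. f a b p q)"
    by (rule sum.cong[OF refl], rule sum.cong[OF refl], rule sum.swap)
  also have "\<dots> = (\<Sum>p\<in>P. \<Sum>q\<in>Q. \<Sum>a\<in>A. \<Sum>b\<in>B. f a b p q)"
    by (rule sum.cong[OF refl], rule sum.swap)
  finally show ?thesis .
qed

lemma cnj_mv: assumes "herm D" shows "cnj ((D *v x) $ i) = (\<Sum>p\<in>UNIV. cnj (x$p) * D$p$i)"
  by (simp add: matrix_vector_mult_def herm_cnj[OF assms] mult.commute)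

lemma qf_HH:
  assumes h: "herm D"
  shows "qf (HH D \<iota> R) x x = (\<Sum>a\<in>UNIV. \<Sum>b\<in>UNIV. cnj ((D *v x)$(\<iota> a)) * kk R a b * (D *v x)$(\<iota> b))"
proof -
  have "(\<Sum>a\<in>UNIV. \<Sum>b\<in>UNIV. cnj ((D *v x)$(\<iota> a)) * kk R a b * (D *v x)$(\<iota> b))
     = (\<Sum>a\<in>UNIV. \<Sum>b\<in>UNIV. \<Sum>p\<in>UNIV. \<Sum>q\<in>UNIV. cnj (x$p) * (D$p$(\<iota> a) * kk R a b * D$(\<iota> b)$q) * x$q)"
    apply (simp only: cnj_mv[OF h])
    apply (simp add: matrix_vector_mult_def sum_distrib_left sum_distrib_right mult_ac)
    done
  also have "\<dots> = (\<Sum>p\<in>UNIV. \<Sum>q\<in>UNIV. \<Sum>a\<in>UNIV. \<Sum>b\<in>UNIV. cnj (x$p) * (D$p$(\<iota> a) * kk R a b * D$(\<iota> b)$q) * x$q)"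
    by (rule swap4)
  also have "\<dots> = qf (HH D \<iota> R) x x"
    by (simp add: qf_def HH_def sum_distrib_left sum_distrib_right)
  finally show ?thesis by simp
qed

lemma qf_axis_left: "qf D (axis i 1) x = (D *v x) $ i"
proof -
  have "qf D (axis i 1) x = (\<Sum>k\<in>UNIV. if k = i then (\<Sum>j\<in>UNIV. D$k$j * x$j) else 0)"
    unfolding qf_def by (rule sum.cong) (auto simp: axis_def)
  also have "\<dots> = (D *v x) $ i" by (simp add: matrix_vector_mult_def)
  finally show ?thesis .
qed

lemma mv_axis: "((D::complex^'m::finite^'m) *v axis j 1) $ i = D$i$j"
proof -
  have "((D::complex^'m::finite^'m) *v axis j 1) $ i = (\<Sum>k\<in>UNIV. if k = j then D$i$k else 0)"
    unfolding matrix_vector_mult_def by (simp add: axis_def mult_ind)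
  thus ?thesis by simp
qed

lemma HH_bound:
  fixes D :: "complex^'m::finite^'m"
  assumes h: "herm D" and psd: "\<And>x. 0 \<le> Re (qf D x x)" and tr: "trace D = 1"
  shows "cmod (qf (HH D \<iota> R) x x) \<le> (\<Sum>a\<in>UNIV. \<Sum>b\<in>UNIV. cmod (kk R a b)) * Re (qf D x x)"
proof -
  define q where "q = Re (qf D x x)"
  define y where "y = D *v x"
  have dge: "0 \<le> Re (D$i$i)" for i
    using psd[of "axis i 1"] by (simp add: qf_axis_left mv_axis)
  have dle: "Re (D$i$i) \<le> 1" for i
  proof -
    have "Re (D$i$i) \<le> (\<Sum>j\<in>UNIV. Re (D$j$j))"
      by (rule member_le_sum) (auto intro: dge)
    also have "\<dots> = Re (trace D)" by (simp add: trace_def Re_sum)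
    finally show ?thesis using tr by simp
  qed
  have q0: "0 \<le> q" unfolding q_def by (rule psd)
  have yb: "(cmod (y$i))^2 \<le> q" for i
  proof -
    have "(cmod (qf D (axis i 1) x))^2 \<le> Re (qf D (axis i 1) (axis i 1)) * q"
      unfolding q_def by (rule cauchy_schwarz_qf[OF h psd])
    also have "\<dots> \<le> 1 * q"
      by (rule mult_right_mono) (use dle q0 in \<open>auto simp: qf_axis_left mv_axis\<close>)
    finally show ?thesis by (simp add: qf_axis_left y_def)
  qed
  have pb: "cmod (y$i) * cmod (y$j) \<le> q" for i j
  proof -
    have "0 \<le> (cmod (y$i) - cmod (y$j))^2" by simp
    hence "2 * (cmod (y$i) * cmod (y$j)) \<le> (cmod (y$i))^2 + (cmod (y$j))^2"
      by (simp add: power2_eq_square algebra_simps)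
    thus ?thesis using yb[of i] yb[of j] by simp
  qed
  have "cmod (qf (HH D \<iota> R) x x) = cmod (\<Sum>a\<in>UNIV. \<Sum>b\<in>UNIV. cnj (y$(\<iota> a)) * kk R a b * y$(\<iota> b))"
    by (simp add: qf_HH[OF h] y_def)
  also have "\<dots> \<le> (\<Sum>a\<in>UNIV. \<Sum>b\<in>UNIV. cmod (kk R a b) * q)"
  proof (rule order_trans[OF norm_sum], rule sum_mono, rule order_trans[OF norm_sum], rule sum_mono)
    fix a b
    have "cmod (cnj (y$(\<iota> a)) * kk R a b * y$(\<iota> b)) = cmod (kk R a b) * (cmod (y$(\<iota> a)) * cmod (y$(\<iota> b)))"
      by (simp add: norm_mult)
    also have "\<dots> \<le> cmod (kk R a b) * q"
      by (rule mult_left_mono[OF pb]) simp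
    finally show "cmod (cnj (y$(\<iota> a)) * kk R a b * y$(\<iota> b)) \<le> cmod (kk R a b) * q" .
  qed
  also have "\<dots> = (\<Sum>a\<in>UNIV. \<Sum>b\<in>UNIV. cmod (kk R a b)) * q"
    by (simp add: sum_distrib_right)
  finally show ?thesis by (simp add: q_def)
qed

definition hh :: "complex^'n^'n \<Rightarrow> real^('n\<times>'n)" where
  "hh M = (\<chi> ab. Re (M$fst ab$snd ab) + Im (M$fst ab$snd ab))"

lemma hh_zero: assumes h: "herm M" and z: "hh M = 0" shows "M = 0"
proof -
  have "M$a$b = 0" for a b
  proof -
    have "Re (M$a$b) + Im (M$a$b) = 0" "Re (M$b$a) + Im (M$b$a) = 0"
      using z by (auto simp: hh_def vec_eq_iff dest: spec[of _ "(a,b)"] spec[of _ "(b,a)"])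
    moreover have "M$b$a = cnj (M$a$b)" using h unfolding herm_def by blast
    ultimately show ?thesis by (simp add: complex_eq_iff)
  qed
  thus ?thesis by (simp add: vec_eq_iff)
qed

lemma ptr1_herm: assumes h: "herm H" shows "herm (ptr1 H)"
  by (simp add: herm_def ptr1_def herm_cnj[OF h])
lemma ptr2_herm: assumes h: "herm H" shows "herm (ptr2 H)"
  by (simp add: herm_def ptr2_def herm_cnj[OF h])

lemma HH_add: "HH D \<iota> (R + S) = HH D \<iota> R + HH D \<iota> S"
  by (simp add: vec_eq_iff HH_def kk_add algebra_simps sum.distrib)
lemma HH_scale: "HH D \<iota> (c *\<^sub>R R) = c *\<^sub>R HH D \<iota> R"
  by (simp add: vec_eq_iff HH_def kk_scale cscale sum_distrib_left mult_ac)
lemma ptr1_add: "ptr1 (H + K) = ptr1 H + ptr1 K"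
  by (simp add: vec_eq_iff ptr1_def sum.distrib)
lemma ptr1_scale: "ptr1 (c *\<^sub>R H) = c *\<^sub>R ptr1 H"
  by (simp add: vec_eq_iff ptr1_def cscale sum_distrib_left)
lemma ptr2_add: "ptr2 (H + K) = ptr2 H + ptr2 K"
  by (simp add: vec_eq_iff ptr2_def sum.distrib)
lemma ptr2_scale: "ptr2 (c *\<^sub>R H) = c *\<^sub>R ptr2 H"
  by (simp add: vec_eq_iff ptr2_def cscale sum_distrib_left)
lemma hh_add: "hh (M + N) = hh M + hh N"
  by (simp add: vec_eq_iff hh_def)
lemma hh_scale: "hh (c *\<^sub>R M) = c *\<^sub>R hh M"
  by (simp add: vec_eq_iff hh_def cscale algebra_simps)

lemma upper:
  fixes D :: "complex^('n::finite\<times>'n)^('n\<times>'n)"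
  assumes G: "D \<in> Gamma" and r: "rank D \<ge> 5" and n: "CARD('n) = 3"
  shows "\<not> D extreme_point_of Gamma"
proof -
  have h: "herm D" and psd: "\<And>x. 0 \<le> Re (qf D x x)" and tr: "trace D = 1"
    using G by (auto simp: Gamma_def density_matrix_alt)
  obtain \<iota> :: "5 \<Rightarrow> 'n\<times>'n" where ind: "\<And>c. (\<Sum>a\<in>UNIV. c a *s row (\<iota> a) D) = 0 \<Longrightarrow> (\<forall>a. c a = 0)"
    using rows_indep[OF r] by blast
  define T :: "real^(5\<times>5) \<Rightarrow> (real^('n\<times>'n)) \<times> (real^('n\<times>'n))"
    where "T = (\<lambda>R. (hh (ptr1 (HH D \<iota> R)), hh (ptr2 (HH D \<iota> R))))"
  have lin: "linear T"
    by (rule linearI) (simp_all add: T_def HH_add HH_scale ptr1_add ptr1_scale ptr2_add ptr2_scale hh_add hh_scale)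
  have "\<not> inj T"
  proof
    assume inj: "inj T"
    have "dim (T ` UNIV) = dim (UNIV :: (real^(5\<times>5)) set)"
      by (rule dim_image_eq[OF lin]) (use inj in \<open>auto simp: inj_on_def inj_def\<close>)
    also have "\<dots> = 25" by simp
    finally have "25 \<le> DIM((real^('n\<times>'n)) \<times> (real^('n\<times>'n)))"
      by (metis dim_subset_UNIV)
    thus False using n by simp
  qed
  then obtain R1 R2 where eq: "T R1 = T R2" and ne: "R1 \<noteq> R2" by (auto simp: inj_def)
  define R where "R = R1 - R2"
  have R0: "R \<noteq> 0" using ne by (simp add: R_def)
  have TR: "T R = 0" using eq by (simp add: R_def linear_diff[OF lin])
  define H where "H = HH D \<iota> R"
  have hH: "herm H" unfolding H_def by (rule herm_HH[OF h])
  have H0: "H \<noteq> 0" using HH_zero[OF h ind] R0 by (auto simp: H_def)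
  have p1: "ptr1 H = 0"
    by (rule hh_zero[OF ptr1_herm[OF hH]]) (use TR in \<open>simp add: T_def H_def zero_prod_def\<close>)
  have p2: "ptr2 H = 0"
    by (rule hh_zero[OF ptr2_herm[OF hH]]) (use TR in \<open>simp add: T_def H_def zero_prod_def\<close>)
  have C0: "0 \<le> (\<Sum>a\<in>UNIV. \<Sum>b\<in>UNIV. cmod (kk R a b))"
    by (intro sum_nonneg) simp
  show ?thesis
    by (rule not_extreme[OF G hH H0 p1 p2, of "\<Sum>a\<in>UNIV. \<Sum>b\<in>UNIV. cmod (kk R a b)"])
      (auto simp: H_def intro: HH_bound[OF h psd tr] C0)
qed

lemma sum9: "(\<Sum>p\<in>(UNIV::(3\<times>3) set). f p) = f (1,1) + f (1,2) + f(1,3) + f (2,1) + f(2,2) + f(2,3) + f(3,1) + f(3,2) + f(3,3)"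
  by (subst sum_pair) (simp add: sum_3 add.assoc)

lemma ind_mult: "(if P then 1 else 0) * (y::complex) = (if P then y else 0)" by simp

lemma sum_delta_both:
  fixes a :: "'a::finite" and b :: "'b::finite"
  shows "(\<Sum>x\<in>UNIV. \<Sum>y\<in>UNIV. if y = b \<and> x = a then f x y else (0::complex)) = f a b"
proof -
  have "(\<Sum>y\<in>UNIV. if y = b \<and> x = a then f x y else (0::complex)) = (if x = a then f x b else 0)" for x
    by (cases "x = a") simp_all
  thus ?thesis by simp
qed

lemma sum_diag:
  fixes A :: "complex^'n::finite^'n"
  shows "(\<Sum>a\<in>UNIV. \<Sum>b\<in>UNIV. A$b$a * (if a = b then c else 0)) = trace A * c"
proof -
  have "(\<Sum>b\<in>UNIV. A$b$a * (if a = b then c else 0)) = A$a$a * c" for a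
  proof -
    have "\<And>b. A$b$a * (if a = b then c else 0) = (if a = b then A$a$a * c else 0)" by auto
    thus ?thesis by simp
  qed
  thus ?thesis by (simp add: trace_def sum_distrib_right)
qed

lemma gamma_ptr1:
  fixes D :: "complex^('n::finite\<times>'n)^('n\<times>'n)"
  assumes "D \<in> Gamma"
  shows "ptr1 D $ a $ b = (if a = b then 1 / of_nat CARD('n) else 0)"
proof -
  define A :: "complex^'n^'n" where "A = (\<chi> i j. if i = b \<and> j = a then 1 else 0)"
  have "trace (D ** kron A (mat 1)) = ntr A" using assms by (simp add: Gamma_def)
  moreover have "trace (D ** kron A (mat 1)) = ptr1 D $ a $ b"
    by (simp add: trace_kron1 A_def ind_mult sum_delta_both)
  moreover have "ntr A = (if a = b then 1 / of_nat CARD('n) else 0)"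
  proof (cases "a = b")
    case True thus ?thesis by (simp add: ntr_def trace_def A_def)
  next
    case False
    have "(\<Sum>i\<in>UNIV. A$i$i) = 0"
      by (rule sum.neutral) (use False in \<open>auto simp: A_def\<close>)
    thus ?thesis using False by (simp add: ntr_def trace_def)
  qed
  ultimately show ?thesis by simp
qed

lemma gamma_ptr2:
  fixes D :: "complex^('n::finite\<times>'n)^('n\<times>'n)"
  assumes "D \<in> Gamma"
  shows "ptr2 D $ a $ b = (if a = b then 1 / of_nat CARD('n) else 0)"
proof -
  define A :: "complex^'n^'n" where "A = (\<chi> i j. if i = b \<and> j = a then 1 else 0)"
  have "trace (D ** kron (mat 1) A) = ntr A" using assms by (simp add: Gamma_def)
  moreover have "trace (D ** kron (mat 1) A) = ptr2 D $ a $ b"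
    by (simp add: trace_kron2 A_def ind_mult sum_delta_both)
  moreover have "ntr A = (if a = b then 1 / of_nat CARD('n) else 0)"
  proof (cases "a = b")
    case True thus ?thesis by (simp add: ntr_def trace_def A_def)
  next
    case False
    have "(\<Sum>i\<in>UNIV. A$i$i) = 0"
      by (rule sum.neutral) (use False in \<open>auto simp: A_def\<close>)
    thus ?thesis using False by (simp add: ntr_def trace_def)
  qed
  ultimately show ?thesis by simp
qed

lemma gamma_intro:
  fixes D :: "complex^('n::finite\<times>'n)^('n\<times>'n)"
  assumes "density_matrix D"
    and p1: "\<And>a b. ptr1 D $ a $ b = (if a = b then 1 / of_nat CARD('n) else 0)"
    and p2: "\<And>a b. ptr2 D $ a $ b = (if a = b then 1 / of_nat CARD('n) else 0)"
  shows "D \<in> Gamma"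
proof -
  have "trace (D ** kron A (mat 1)) = ntr A" for A :: "complex^'n^'n"
    unfolding trace_kron1 p1 ntr_def sum_diag by simp
  moreover have "trace (D ** kron (mat 1) B) = ntr B" for B :: "complex^'n^'n"
    unfolding trace_kron2 p2 ntr_def sum_diag by simp
  ultimately show ?thesis using assms by (simp add: Gamma_def)
qed

lemma qf_mv: "qf D x x = (\<Sum>i\<in>UNIV. cnj (x$i) * (D *v x)$i)"
  by (simp add: qf_def matrix_vector_mult_def sum_distrib_left mult.assoc)

lemma kernel_transfer:
  fixes D D1 D2 :: "complex^'m::finite^'m"
  assumes d1: "density_matrix D1" and d2: "density_matrix D2"
    and eq: "D = (1 - u) *\<^sub>R D1 + u *\<^sub>R D2" and u: "0 \<le> u" "u < 1"
    and z: "D *v x = 0"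
  shows "D1 *v x = 0"
proof -
  have h1: "herm D1" and p1: "\<And>x. 0 \<le> Re (qf D1 x x)" using d1 by (auto simp: density_matrix_alt)
  have p2: "\<And>x. 0 \<le> Re (qf D2 x x)" using d2 by (auto simp: density_matrix_alt)
  have "qf D x x = 0" using z by (simp add: qf_mv)
  moreover have "Re (qf D x x) = (1 - u) * Re (qf D1 x x) + u * Re (qf D2 x x)"
    unfolding eq by (simp add: qf_madd qf_mscale)
  ultimately have "(1 - u) * Re (qf D1 x x) + u * Re (qf D2 x x) = 0"
    by simp
  moreover have "0 \<le> (1 - u) * Re (qf D1 x x)" "0 \<le> u * Re (qf D2 x x)"
    using u p1[of x] p2[of x] by auto
  ultimately have "(1 - u) * Re (qf D1 x x) = 0" by linarith
  hence "Re (qf D1 x x) = 0" using u by simp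
  thus ?thesis by (rule psd_kernel[OF h1 p1])
qed

definition outer :: "(('m::finite) \<Rightarrow> complex) \<Rightarrow> complex^'m^'m" where
  "outer w = (\<chi> p q. w p * cnj (w q))"

lemma qf_outer: "qf (outer w) x x = of_real ((cmod (\<Sum>q\<in>UNIV. cnj (w q) * x$q))^2)"
proof -
  define S where "S = (\<Sum>q\<in>UNIV. cnj (w q) * x$q)"
  have "qf (outer w) x x = cnj S * S"
    by (simp add: S_def qf_def outer_def sum_product mult_ac)
  also have "\<dots> = of_real ((cmod S)^2)"
  proof -
    have "of_real ((cmod S)^2) = S * cnj S" by (rule complex_norm_square)
    thus ?thesis by (simp only: mult.commute)
  qed
  finally show ?thesis by (simp add: S_def)
qed

lemma herm_outer: "herm (outer w)"
  by (simp add: herm_def outer_def)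

lemma trace_outer: "trace (outer w) = of_real (\<Sum>q\<in>UNIV. (cmod (w q))^2)"
  by (simp add: trace_def outer_def complex_mult_cnj cmod_power2)

definition w1 :: "3\<times>3 \<Rightarrow> complex" where "w1 p = (if p = (1,3) then -1 else if p = (2,2) then 1 else 0)"
definition w2 :: "3\<times>3 \<Rightarrow> complex" where "w2 p = (if p = (1,1) then 1 else if p = (3,3) then 1 else 0)"
definition w3 :: "3\<times>3 \<Rightarrow> complex" where "w3 p = (if p = (2,1) then 1 else 0)"
definition w4 :: "3\<times>3 \<Rightarrow> complex" where "w4 p = (if p = (1,1) then 1 else if p = (2,3) then -1 else if p = (3,2) then -2 else 0)"

definition Dex :: "complex^(3\<times>3)^(3\<times>3)" where
  "Dex = (1/7) *\<^sub>R outer w1 + (1/7) *\<^sub>R outer w2 + (1/7) *\<^sub>R outer w3 + (1/21) *\<^sub>R outer w4"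

lemma Dex_entry: "Dex $ p $ q = of_real (1/7) * (w1 p * cnj (w1 q) + w2 p * cnj (w2 q) + w3 p * cnj (w3 q))
   + of_real (1/21) * (w4 p * cnj (w4 q))"
  by (simp add: Dex_def outer_def cscale algebra_simps)

lemma herm_zero: "herm (0::complex^'m^'m)" by (simp add: herm_def)

lemma herm_scale: "herm H \<Longrightarrow> herm (c *\<^sub>R H)"
  using herm_perturb[OF herm_zero, of H c] by simp

lemma Dex_herm: "herm Dex"
  unfolding Dex_def by (intro herm_perturb herm_scale herm_outer)

lemma Dex_psd: "0 \<le> Re (qf Dex x x)"
  unfolding Dex_def by (simp add: qf_madd qf_mscale qf_outer)

lemma Dex_trace: "trace Dex = 1"
  unfolding Dex_def by (simp add: trace_perturb0 trace_def outer_def sum9 w1_def w2_def w3_def w4_def cscale)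

lemma Dex_ptr1: "ptr1 Dex $ a $ b = (if a = b then 1 / of_nat CARD(3) else 0)"
  using exhaust_3[of a] exhaust_3[of b]
  by (auto simp: ptr1_def Dex_entry sum_3 w1_def w2_def w3_def w4_def)

lemma Dex_ptr2: "ptr2 Dex $ a $ b = (if a = b then 1 / of_nat CARD(3) else 0)"
  using exhaust_3[of a] exhaust_3[of b]
  by (auto simp: ptr2_def Dex_entry sum_3 w1_def w2_def w3_def w4_def)

lemma Dex_Gamma: "Dex \<in> Gamma"
  by (rule gamma_intro) (auto simp: density_matrix_alt Dex_herm Dex_psd Dex_trace Dex_ptr1 Dex_ptr2)

definition z3 :: "complex^(3\<times>3)" where "z3 = (\<chi> p. if p = (1,3) \<or> p = (2,2) then 1 else 0)"
definition z4 :: "complex^(3\<times>3)" where "z4 = (\<chi> p. if p = (2,3) then -2 else if p = (3,2) then 1 else 0)"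
definition z5 :: "complex^(3\<times>3)" where "z5 = (\<chi> p. if p = (1,1) then -1 else if p = (2,3) then -1 else if p = (3,3) then 1 else 0)"

lemma Dex_ker1: "Dex *v axis (1,2) 1 = 0"
  by (simp add: vec_eq_iff mv_axis Dex_entry w1_def w2_def w3_def w4_def)
lemma Dex_ker2: "Dex *v axis (3,1) 1 = 0"
  by (simp add: vec_eq_iff mv_axis Dex_entry w1_def w2_def w3_def w4_def)
lemma Dex_ker3: "Dex *v z3 = 0"
  by (simp add: vec_eq_iff matrix_vector_mult_def sum9 z3_def Dex_entry w1_def w2_def w3_def w4_def)
lemma Dex_ker4: "Dex *v z4 = 0"
  by (simp add: vec_eq_iff matrix_vector_mult_def sum9 z4_def Dex_entry w1_def w2_def w3_def w4_def)
lemma Dex_ker5: "Dex *v z5 = 0"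
  by (simp add: vec_eq_iff matrix_vector_mult_def sum9 z5_def Dex_entry w1_def w2_def w3_def w4_def)

lemma Dex_unique:
  assumes G1: "D1 \<in> Gamma"
    and k1: "D1 *v axis (1,2) 1 = 0" and k2: "D1 *v axis (3,1) 1 = 0"
    and k3: "D1 *v z3 = 0" and k4: "D1 *v z4 = 0" and k5: "D1 *v z5 = 0"
  shows "D1 = Dex"
proof -
  have h: "herm D1" using G1 by (simp add: Gamma_def density_matrix_alt)
  have c1: "D1$p$(1,2) = 0" for p using arg_cong[OF k1, of "\<lambda>v. v$p"] by (simp add: mv_axis)
  have c2: "D1$p$(3,1) = 0" for p using arg_cong[OF k2, of "\<lambda>v. v$p"] by (simp add: mv_axis)
  have c3: "D1$p$(1,3) = - D1$p$(2,2)" for p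
    using arg_cong[OF k3, of "\<lambda>v. v$p"] by (simp add: matrix_vector_mult_def sum9 z3_def add_eq_0_iff)
  have c4: "D1$p$(3,2) = 2 * D1$p$(2,3)" for p
    using arg_cong[OF k4, of "\<lambda>v. v$p"] by (simp add: matrix_vector_mult_def sum9 z4_def algebra_simps)
  have c5: "D1$p$(3,3) = D1$p$(1,1) + D1$p$(2,3)" for p
    using arg_cong[OF k5, of "\<lambda>v. v$p"] by (simp add: matrix_vector_mult_def sum9 z5_def algebra_simps)
  have hc: "D1$q$p = cnj (D1$p$q)" for p q using h unfolding herm_def by blast
  have r1: "D1$(1,2)$q = 0" for q using hc[of q "(1,2)"] c1[of q] by simp
  have r2: "D1$(3,1)$q = 0" for q using hc[of q "(3,1)"] c2[of q] by simp
  have r3: "D1$(1,3)$q = - D1$(2,2)$q" for q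
  proof -
    have "D1$(1,3)$q = cnj (D1$q$(1,3))" by (rule hc)
    also have "\<dots> = cnj (- D1$q$(2,2))" by (simp only: c3)
    also have "\<dots> = - D1$(2,2)$q" using hc[of q "(2,2)"] by simp
    finally show ?thesis .
  qed
  have r4: "D1$(3,2)$q = 2 * D1$(2,3)$q" for q
  proof -
    have "D1$(3,2)$q = cnj (D1$q$(3,2))" by (rule hc)
    also have "\<dots> = cnj (2 * D1$q$(2,3))" by (simp only: c4)
    also have "\<dots> = 2 * D1$(2,3)$q" using hc[of q "(2,3)"] by simp
    finally show ?thesis .
  qed
  have r5: "D1$(3,3)$q = D1$(1,1)$q + D1$(2,3)$q" for q
  proof -
    have "D1$(3,3)$q = cnj (D1$q$(3,3))" by (rule hc)
    also have "\<dots> = cnj (D1$q$(1,1) + D1$q$(2,3))" by (simp only: c5)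
    also have "\<dots> = D1$(1,1)$q + D1$(2,3)$q" using hc[of q "(1,1)"] hc[of q "(2,3)"] by simp
    finally show ?thesis .
  qed
  note cr = c1 c2 c3 c4 c5 r1 r2 r3 r4 r5
  have P1: "D1$(a,1)$(b,1) + D1$(a,2)$(b,2) + D1$(a,3)$(b,3) = (if a = b then 1/3 else 0)" for a b
    using gamma_ptr1[OF G1, of a b] by (simp add: ptr1_def sum_3)
  have P2: "D1$(1,a)$(1,b) + D1$(2,a)$(2,b) + D1$(3,a)$(3,b) = (if a = b then 1/3 else 0)" for a b
    using gamma_ptr2[OF G1, of a b] by (simp add: ptr2_def sum_3)
have e0: "D1$(1,1)$(1,1) + D1$(2,2)$(2,2) = 1/3" using P1[of 1 1] by (simp add: cr algebra_simps)
  have r0: "Re (D1$(1,1)$(1,1)) + Re (D1$(2,2)$(2,2)) = 1/3" and i0: "Im (D1$(1,1)$(1,1)) + Im (D1$(2,2)$(2,2)) = 0" using e0 by (simp_all add: complex_eq_iff)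
  have e1: "D1$(1,1)$(2,1) - D1$(2,2)$(2,3) = 0" using P1[of 1 2] by (simp add: cr algebra_simps)
  have r1: "Re (D1$(1,1)$(2,1)) - Re (D1$(2,2)$(2,3)) = 0" and i1: "Im (D1$(1,1)$(2,1)) - Im (D1$(2,2)$(2,3)) = 0" using e1 by (simp_all add: complex_eq_iff)
  have e2: "- D1$(2,2)$(1,1) - D1$(2,2)$(2,3) = 0" using P1[of 1 3] by (simp add: cr algebra_simps)
  have r2: "- Re (D1$(2,2)$(1,1)) - Re (D1$(2,2)$(2,3)) = 0" and i2: "- Im (D1$(2,2)$(1,1)) - Im (D1$(2,2)$(2,3)) = 0" using e2 by (simp_all add: complex_eq_iff)
  have e3: "D1$(2,1)$(1,1) - D1$(2,3)$(2,2) = 0" using P1[of 2 1] by (simp add: cr algebra_simps)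
  have r3: "Re (D1$(2,1)$(1,1)) - Re (D1$(2,3)$(2,2)) = 0" and i3: "Im (D1$(2,1)$(1,1)) - Im (D1$(2,3)$(2,2)) = 0" using e3 by (simp_all add: complex_eq_iff)
  have e4: "D1$(2,1)$(2,1) + D1$(2,2)$(2,2) + D1$(2,3)$(2,3) = 1/3" using P1[of 2 2] by (simp add: cr algebra_simps)
  have r4: "Re (D1$(2,1)$(2,1)) + Re (D1$(2,2)$(2,2)) + Re (D1$(2,3)$(2,3)) = 1/3" and i4: "Im (D1$(2,1)$(2,1)) + Im (D1$(2,2)$(2,2)) + Im (D1$(2,3)$(2,3)) = 0" using e4 by (simp_all add: complex_eq_iff)
  have e5: "2 * D1$(2,2)$(2,3) + D1$(2,3)$(1,1) + D1$(2,3)$(2,3) = 0" using P1[of 2 3] by (simp add: cr algebra_simps)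
  have r5: "2 * Re (D1$(2,2)$(2,3)) + Re (D1$(2,3)$(1,1)) + Re (D1$(2,3)$(2,3)) = 0" and i5: "2 * Im (D1$(2,2)$(2,3)) + Im (D1$(2,3)$(1,1)) + Im (D1$(2,3)$(2,3)) = 0" using e5 by (simp_all add: complex_eq_iff)
  have e6: "- D1$(1,1)$(2,2) - D1$(2,3)$(2,2) = 0" using P1[of 3 1] by (simp add: cr algebra_simps)
  have r6: "- Re (D1$(1,1)$(2,2)) - Re (D1$(2,3)$(2,2)) = 0" and i6: "- Im (D1$(1,1)$(2,2)) - Im (D1$(2,3)$(2,2)) = 0" using e6 by (simp_all add: complex_eq_iff)
  have e7: "D1$(1,1)$(2,3) + 2 * D1$(2,3)$(2,2) + D1$(2,3)$(2,3) = 0" using P1[of 3 2] by (simp add: cr algebra_simps)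
  have r7: "Re (D1$(1,1)$(2,3)) + 2 * Re (D1$(2,3)$(2,2)) + Re (D1$(2,3)$(2,3)) = 0" and i7: "Im (D1$(1,1)$(2,3)) + 2 * Im (D1$(2,3)$(2,2)) + Im (D1$(2,3)$(2,3)) = 0" using e7 by (simp_all add: complex_eq_iff)
  have e8: "D1$(1,1)$(1,1) + D1$(1,1)$(2,3) + D1$(2,3)$(1,1) + 5 * D1$(2,3)$(2,3) = 1/3" using P1[of 3 3] by (simp add: cr algebra_simps)
  have r8: "Re (D1$(1,1)$(1,1)) + Re (D1$(1,1)$(2,3)) + Re (D1$(2,3)$(1,1)) + 5 * Re (D1$(2,3)$(2,3)) = 1/3" and i8: "Im (D1$(1,1)$(1,1)) + Im (D1$(1,1)$(2,3)) + Im (D1$(2,3)$(1,1)) + 5 * Im (D1$(2,3)$(2,3)) = 0" using e8 by (simp_all add: complex_eq_iff)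
  have e9: "D1$(1,1)$(1,1) + D1$(2,1)$(2,1) = 1/3" using P2[of 1 1] by (simp add: cr algebra_simps)
  have r9: "Re (D1$(1,1)$(1,1)) + Re (D1$(2,1)$(2,1)) = 1/3" and i9: "Im (D1$(1,1)$(1,1)) + Im (D1$(2,1)$(2,1)) = 0" using e9 by (simp_all add: complex_eq_iff)
  have e10: "D1$(2,1)$(2,2) = 0" using P2[of 1 2] by (simp add: cr algebra_simps)
  have r10: "Re (D1$(2,1)$(2,2)) = 0" and i10: "Im (D1$(2,1)$(2,2)) = 0" using e10 by (simp_all add: complex_eq_iff)
  have e11: "- D1$(1,1)$(2,2) + D1$(2,1)$(2,3) = 0" using P2[of 1 3] by (simp add: cr algebra_simps)
  have r11: "- Re (D1$(1,1)$(2,2)) + Re (D1$(2,1)$(2,3)) = 0" and i11: "- Im (D1$(1,1)$(2,2)) + Im (D1$(2,1)$(2,3)) = 0" using e11 by (simp_all add: complex_eq_iff)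
  have e12: "D1$(2,2)$(2,1) = 0" using P2[of 2 1] by (simp add: cr algebra_simps)
  have r12: "Re (D1$(2,2)$(2,1)) = 0" and i12: "Im (D1$(2,2)$(2,1)) = 0" using e12 by (simp_all add: complex_eq_iff)
  have e13: "D1$(2,2)$(2,2) + 4 * D1$(2,3)$(2,3) = 1/3" using P2[of 2 2] by (simp add: cr algebra_simps)
  have r13: "Re (D1$(2,2)$(2,2)) + 4 * Re (D1$(2,3)$(2,3)) = 1/3" and i13: "Im (D1$(2,2)$(2,2)) + 4 * Im (D1$(2,3)$(2,3)) = 0" using e13 by (simp_all add: complex_eq_iff)
  have e14: "D1$(2,2)$(2,3) + 2 * D1$(2,3)$(1,1) + 2 * D1$(2,3)$(2,3) = 0" using P2[of 2 3] by (simp add: cr algebra_simps)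
  have r14: "Re (D1$(2,2)$(2,3)) + 2 * Re (D1$(2,3)$(1,1)) + 2 * Re (D1$(2,3)$(2,3)) = 0" and i14: "Im (D1$(2,2)$(2,3)) + 2 * Im (D1$(2,3)$(1,1)) + 2 * Im (D1$(2,3)$(2,3)) = 0" using e14 by (simp_all add: complex_eq_iff)
  have e15: "- D1$(2,2)$(1,1) + D1$(2,3)$(2,1) = 0" using P2[of 3 1] by (simp add: cr algebra_simps)
  have r15: "- Re (D1$(2,2)$(1,1)) + Re (D1$(2,3)$(2,1)) = 0" and i15: "- Im (D1$(2,2)$(1,1)) + Im (D1$(2,3)$(2,1)) = 0" using e15 by (simp_all add: complex_eq_iff)
  have e16: "2 * D1$(1,1)$(2,3) + D1$(2,3)$(2,2) + 2 * D1$(2,3)$(2,3) = 0" using P2[of 3 2] by (simp add: cr algebra_simps)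
  have r16: "2 * Re (D1$(1,1)$(2,3)) + Re (D1$(2,3)$(2,2)) + 2 * Re (D1$(2,3)$(2,3)) = 0" and i16: "2 * Im (D1$(1,1)$(2,3)) + Im (D1$(2,3)$(2,2)) + 2 * Im (D1$(2,3)$(2,3)) = 0" using e16 by (simp_all add: complex_eq_iff)
  have e17: "D1$(1,1)$(1,1) + D1$(1,1)$(2,3) + D1$(2,2)$(2,2) + D1$(2,3)$(1,1) + 2 * D1$(2,3)$(2,3) = 1/3" using P2[of 3 3] by (simp add: cr algebra_simps)
  have r17: "Re (D1$(1,1)$(1,1)) + Re (D1$(1,1)$(2,3)) + Re (D1$(2,2)$(2,2)) + Re (D1$(2,3)$(1,1)) + 2 * Re (D1$(2,3)$(2,3)) = 1/3" and i17: "Im (D1$(1,1)$(1,1)) + Im (D1$(1,1)$(2,3)) + Im (D1$(2,2)$(2,2)) + Im (D1$(2,3)$(1,1)) + 2 * Im (D1$(2,3)$(2,3)) = 0" using e17 by (simp_all add: complex_eq_iff)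
  have "Re (D1$(2,3)$(1,1)) = -1/21" using r0 r1 r2 r3 r4 r5 r6 r7 r8 r9 r10 r11 r12 r13 r14 r15 r16 r17 by linarith
  moreover have "Im (D1$(2,3)$(1,1)) = 0" using i0 i1 i2 i3 i4 i5 i6 i7 i8 i9 i10 i11 i12 i13 i14 i15 i16 i17 by linarith
  ultimately have s0: "D1$(2,3)$(1,1) = -1/21" by (simp add: complex_eq_iff)
  have "Re (D1$(2,3)$(2,3)) = 1/21" using r0 r1 r2 r3 r4 r5 r6 r7 r8 r9 r10 r11 r12 r13 r14 r15 r16 r17 by linarith
  moreover have "Im (D1$(2,3)$(2,3)) = 0" using i0 i1 i2 i3 i4 i5 i6 i7 i8 i9 i10 i11 i12 i13 i14 i15 i16 i17 by linarith
  ultimately have s1: "D1$(2,3)$(2,3) = 1/21" by (simp add: complex_eq_iff)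
  have "Re (D1$(2,2)$(2,3)) = 0" using r0 r1 r2 r3 r4 r5 r6 r7 r8 r9 r10 r11 r12 r13 r14 r15 r16 r17 by linarith
  moreover have "Im (D1$(2,2)$(2,3)) = 0" using i0 i1 i2 i3 i4 i5 i6 i7 i8 i9 i10 i11 i12 i13 i14 i15 i16 i17 by linarith
  ultimately have s2: "D1$(2,2)$(2,3) = 0" by (simp add: complex_eq_iff)
  have "Re (D1$(1,1)$(2,3)) = -1/21" using r0 r1 r2 r3 r4 r5 r6 r7 r8 r9 r10 r11 r12 r13 r14 r15 r16 r17 by linarith
  moreover have "Im (D1$(1,1)$(2,3)) = 0" using i0 i1 i2 i3 i4 i5 i6 i7 i8 i9 i10 i11 i12 i13 i14 i15 i16 i17 by linarith
  ultimately have s3: "D1$(1,1)$(2,3) = -1/21" by (simp add: complex_eq_iff)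
  have "Re (D1$(2,3)$(2,2)) = 0" using r0 r1 r2 r3 r4 r5 r6 r7 r8 r9 r10 r11 r12 r13 r14 r15 r16 r17 by linarith
  moreover have "Im (D1$(2,3)$(2,2)) = 0" using i0 i1 i2 i3 i4 i5 i6 i7 i8 i9 i10 i11 i12 i13 i14 i15 i16 i17 by linarith
  ultimately have s4: "D1$(2,3)$(2,2) = 0" by (simp add: complex_eq_iff)
  have "Re (D1$(2,2)$(1,1)) = 0" using r0 r1 r2 r3 r4 r5 r6 r7 r8 r9 r10 r11 r12 r13 r14 r15 r16 r17 by linarith
  moreover have "Im (D1$(2,2)$(1,1)) = 0" using i0 i1 i2 i3 i4 i5 i6 i7 i8 i9 i10 i11 i12 i13 i14 i15 i16 i17 by linarith
  ultimately have s5: "D1$(2,2)$(1,1) = 0" by (simp add: complex_eq_iff)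
  have "Re (D1$(1,1)$(2,2)) = 0" using r0 r1 r2 r3 r4 r5 r6 r7 r8 r9 r10 r11 r12 r13 r14 r15 r16 r17 by linarith
  moreover have "Im (D1$(1,1)$(2,2)) = 0" using i0 i1 i2 i3 i4 i5 i6 i7 i8 i9 i10 i11 i12 i13 i14 i15 i16 i17 by linarith
  ultimately have s6: "D1$(1,1)$(2,2) = 0" by (simp add: complex_eq_iff)
  have "Re (D1$(1,1)$(2,1)) = 0" using r0 r1 r2 r3 r4 r5 r6 r7 r8 r9 r10 r11 r12 r13 r14 r15 r16 r17 by linarith
  moreover have "Im (D1$(1,1)$(2,1)) = 0" using i0 i1 i2 i3 i4 i5 i6 i7 i8 i9 i10 i11 i12 i13 i14 i15 i16 i17 by linarith
  ultimately have s7: "D1$(1,1)$(2,1) = 0" by (simp add: complex_eq_iff)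
  have "Re (D1$(2,1)$(1,1)) = 0" using r0 r1 r2 r3 r4 r5 r6 r7 r8 r9 r10 r11 r12 r13 r14 r15 r16 r17 by linarith
  moreover have "Im (D1$(2,1)$(1,1)) = 0" using i0 i1 i2 i3 i4 i5 i6 i7 i8 i9 i10 i11 i12 i13 i14 i15 i16 i17 by linarith
  ultimately have s8: "D1$(2,1)$(1,1) = 0" by (simp add: complex_eq_iff)
  have "Re (D1$(2,1)$(2,3)) = 0" using r0 r1 r2 r3 r4 r5 r6 r7 r8 r9 r10 r11 r12 r13 r14 r15 r16 r17 by linarith
  moreover have "Im (D1$(2,1)$(2,3)) = 0" using i0 i1 i2 i3 i4 i5 i6 i7 i8 i9 i10 i11 i12 i13 i14 i15 i16 i17 by linarith
  ultimately have s9: "D1$(2,1)$(2,3) = 0" by (simp add: complex_eq_iff)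
  have "Re (D1$(2,3)$(2,1)) = 0" using r0 r1 r2 r3 r4 r5 r6 r7 r8 r9 r10 r11 r12 r13 r14 r15 r16 r17 by linarith
  moreover have "Im (D1$(2,3)$(2,1)) = 0" using i0 i1 i2 i3 i4 i5 i6 i7 i8 i9 i10 i11 i12 i13 i14 i15 i16 i17 by linarith
  ultimately have s10: "D1$(2,3)$(2,1) = 0" by (simp add: complex_eq_iff)
  have "Re (D1$(2,1)$(2,2)) = 0" using r0 r1 r2 r3 r4 r5 r6 r7 r8 r9 r10 r11 r12 r13 r14 r15 r16 r17 by linarith
  moreover have "Im (D1$(2,1)$(2,2)) = 0" using i0 i1 i2 i3 i4 i5 i6 i7 i8 i9 i10 i11 i12 i13 i14 i15 i16 i17 by linarith
  ultimately have s11: "D1$(2,1)$(2,2) = 0" by (simp add: complex_eq_iff)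
  have "Re (D1$(2,2)$(2,1)) = 0" using r0 r1 r2 r3 r4 r5 r6 r7 r8 r9 r10 r11 r12 r13 r14 r15 r16 r17 by linarith
  moreover have "Im (D1$(2,2)$(2,1)) = 0" using i0 i1 i2 i3 i4 i5 i6 i7 i8 i9 i10 i11 i12 i13 i14 i15 i16 i17 by linarith
  ultimately have s12: "D1$(2,2)$(2,1) = 0" by (simp add: complex_eq_iff)
  have "Re (D1$(1,1)$(1,1)) = 4/21" using r0 r1 r2 r3 r4 r5 r6 r7 r8 r9 r10 r11 r12 r13 r14 r15 r16 r17 by linarith
  moreover have "Im (D1$(1,1)$(1,1)) = 0" using i0 i1 i2 i3 i4 i5 i6 i7 i8 i9 i10 i11 i12 i13 i14 i15 i16 i17 by linarith
  ultimately have s13: "D1$(1,1)$(1,1) = 4/21" by (simp add: complex_eq_iff)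
  have "Re (D1$(2,2)$(2,2)) = 1/7" using r0 r1 r2 r3 r4 r5 r6 r7 r8 r9 r10 r11 r12 r13 r14 r15 r16 r17 by linarith
  moreover have "Im (D1$(2,2)$(2,2)) = 0" using i0 i1 i2 i3 i4 i5 i6 i7 i8 i9 i10 i11 i12 i13 i14 i15 i16 i17 by linarith
  ultimately have s14: "D1$(2,2)$(2,2) = 1/7" by (simp add: complex_eq_iff)
  have "Re (D1$(2,1)$(2,1)) = 1/7" using r0 r1 r2 r3 r4 r5 r6 r7 r8 r9 r10 r11 r12 r13 r14 r15 r16 r17 by linarith
  moreover have "Im (D1$(2,1)$(2,1)) = 0" using i0 i1 i2 i3 i4 i5 i6 i7 i8 i9 i10 i11 i12 i13 i14 i15 i16 i17 by linarith
  ultimately have s15: "D1$(2,1)$(2,1) = 1/7" by (simp add: complex_eq_iff)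
  note sols = s0 s1 s2 s3 s4 s5 s6 s7 s8 s9 s10 s11 s12 s13 s14 s15
  have f0: "D1$(1,1)$(1,1) = Dex$(1,1)$(1,1)" by (simp add: cr sols Dex_entry w1_def w2_def w3_def w4_def)
  have f1: "D1$(1,1)$(1,2) = Dex$(1,1)$(1,2)" by (simp add: cr sols Dex_entry w1_def w2_def w3_def w4_def)
  have f2: "D1$(1,1)$(1,3) = Dex$(1,1)$(1,3)" by (simp add: cr sols Dex_entry w1_def w2_def w3_def w4_def)
  have f3: "D1$(1,1)$(2,1) = Dex$(1,1)$(2,1)" by (simp add: cr sols Dex_entry w1_def w2_def w3_def w4_def)
  have f4: "D1$(1,1)$(2,2) = Dex$(1,1)$(2,2)" by (simp add: cr sols Dex_entry w1_def w2_def w3_def w4_def)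
  have f5: "D1$(1,1)$(2,3) = Dex$(1,1)$(2,3)" by (simp add: cr sols Dex_entry w1_def w2_def w3_def w4_def)
  have f6: "D1$(1,1)$(3,1) = Dex$(1,1)$(3,1)" by (simp add: cr sols Dex_entry w1_def w2_def w3_def w4_def)
  have f7: "D1$(1,1)$(3,2) = Dex$(1,1)$(3,2)" by (simp add: cr sols Dex_entry w1_def w2_def w3_def w4_def)
  have f8: "D1$(1,1)$(3,3) = Dex$(1,1)$(3,3)" by (simp add: cr sols Dex_entry w1_def w2_def w3_def w4_def)
  have f9: "D1$(1,2)$(1,1) = Dex$(1,2)$(1,1)" by (simp add: cr sols Dex_entry w1_def w2_def w3_def w4_def)
  have f10: "D1$(1,2)$(1,2) = Dex$(1,2)$(1,2)" by (simp add: cr sols Dex_entry w1_def w2_def w3_def w4_def)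
  have f11: "D1$(1,2)$(1,3) = Dex$(1,2)$(1,3)" by (simp add: cr sols Dex_entry w1_def w2_def w3_def w4_def)
  have f12: "D1$(1,2)$(2,1) = Dex$(1,2)$(2,1)" by (simp add: cr sols Dex_entry w1_def w2_def w3_def w4_def)
  have f13: "D1$(1,2)$(2,2) = Dex$(1,2)$(2,2)" by (simp add: cr sols Dex_entry w1_def w2_def w3_def w4_def)
  have f14: "D1$(1,2)$(2,3) = Dex$(1,2)$(2,3)" by (simp add: cr sols Dex_entry w1_def w2_def w3_def w4_def)
  have f15: "D1$(1,2)$(3,1) = Dex$(1,2)$(3,1)" by (simp add: cr sols Dex_entry w1_def w2_def w3_def w4_def)
  have f16: "D1$(1,2)$(3,2) = Dex$(1,2)$(3,2)" by (simp add: cr sols Dex_entry w1_def w2_def w3_def w4_def)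
  have f17: "D1$(1,2)$(3,3) = Dex$(1,2)$(3,3)" by (simp add: cr sols Dex_entry w1_def w2_def w3_def w4_def)
  have f18: "D1$(1,3)$(1,1) = Dex$(1,3)$(1,1)" by (simp add: cr sols Dex_entry w1_def w2_def w3_def w4_def)
  have f19: "D1$(1,3)$(1,2) = Dex$(1,3)$(1,2)" by (simp add: cr sols Dex_entry w1_def w2_def w3_def w4_def)
  have f20: "D1$(1,3)$(1,3) = Dex$(1,3)$(1,3)" by (simp add: cr sols Dex_entry w1_def w2_def w3_def w4_def)
  have f21: "D1$(1,3)$(2,1) = Dex$(1,3)$(2,1)" by (simp add: cr sols Dex_entry w1_def w2_def w3_def w4_def)
  have f22: "D1$(1,3)$(2,2) = Dex$(1,3)$(2,2)" by (simp add: cr sols Dex_entry w1_def w2_def w3_def w4_def)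
  have f23: "D1$(1,3)$(2,3) = Dex$(1,3)$(2,3)" by (simp add: cr sols Dex_entry w1_def w2_def w3_def w4_def)
  have f24: "D1$(1,3)$(3,1) = Dex$(1,3)$(3,1)" by (simp add: cr sols Dex_entry w1_def w2_def w3_def w4_def)
  have f25: "D1$(1,3)$(3,2) = Dex$(1,3)$(3,2)" by (simp add: cr sols Dex_entry w1_def w2_def w3_def w4_def)
  have f26: "D1$(1,3)$(3,3) = Dex$(1,3)$(3,3)" by (simp add: cr sols Dex_entry w1_def w2_def w3_def w4_def)
  have f27: "D1$(2,1)$(1,1) = Dex$(2,1)$(1,1)" by (simp add: cr sols Dex_entry w1_def w2_def w3_def w4_def)
  have f28: "D1$(2,1)$(1,2) = Dex$(2,1)$(1,2)" by (simp add: cr sols Dex_entry w1_def w2_def w3_def w4_def)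
  have f29: "D1$(2,1)$(1,3) = Dex$(2,1)$(1,3)" by (simp add: cr sols Dex_entry w1_def w2_def w3_def w4_def)
  have f30: "D1$(2,1)$(2,1) = Dex$(2,1)$(2,1)" by (simp add: cr sols Dex_entry w1_def w2_def w3_def w4_def)
  have f31: "D1$(2,1)$(2,2) = Dex$(2,1)$(2,2)" by (simp add: cr sols Dex_entry w1_def w2_def w3_def w4_def)
  have f32: "D1$(2,1)$(2,3) = Dex$(2,1)$(2,3)" by (simp add: cr sols Dex_entry w1_def w2_def w3_def w4_def)
  have f33: "D1$(2,1)$(3,1) = Dex$(2,1)$(3,1)" by (simp add: cr sols Dex_entry w1_def w2_def w3_def w4_def)
  have f34: "D1$(2,1)$(3,2) = Dex$(2,1)$(3,2)" by (simp add: cr sols Dex_entry w1_def w2_def w3_def w4_def)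
  have f35: "D1$(2,1)$(3,3) = Dex$(2,1)$(3,3)" by (simp add: cr sols Dex_entry w1_def w2_def w3_def w4_def)
  have f36: "D1$(2,2)$(1,1) = Dex$(2,2)$(1,1)" by (simp add: cr sols Dex_entry w1_def w2_def w3_def w4_def)
  have f37: "D1$(2,2)$(1,2) = Dex$(2,2)$(1,2)" by (simp add: cr sols Dex_entry w1_def w2_def w3_def w4_def)
  have f38: "D1$(2,2)$(1,3) = Dex$(2,2)$(1,3)" by (simp add: cr sols Dex_entry w1_def w2_def w3_def w4_def)
  have f39: "D1$(2,2)$(2,1) = Dex$(2,2)$(2,1)" by (simp add: cr sols Dex_entry w1_def w2_def w3_def w4_def)
  have f40: "D1$(2,2)$(2,2) = Dex$(2,2)$(2,2)" by (simp add: cr sols Dex_entry w1_def w2_def w3_def w4_def)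
  have f41: "D1$(2,2)$(2,3) = Dex$(2,2)$(2,3)" by (simp add: cr sols Dex_entry w1_def w2_def w3_def w4_def)
  have f42: "D1$(2,2)$(3,1) = Dex$(2,2)$(3,1)" by (simp add: cr sols Dex_entry w1_def w2_def w3_def w4_def)
  have f43: "D1$(2,2)$(3,2) = Dex$(2,2)$(3,2)" by (simp add: cr sols Dex_entry w1_def w2_def w3_def w4_def)
  have f44: "D1$(2,2)$(3,3) = Dex$(2,2)$(3,3)" by (simp add: cr sols Dex_entry w1_def w2_def w3_def w4_def)
  have f45: "D1$(2,3)$(1,1) = Dex$(2,3)$(1,1)" by (simp add: cr sols Dex_entry w1_def w2_def w3_def w4_def)
  have f46: "D1$(2,3)$(1,2) = Dex$(2,3)$(1,2)" by (simp add: cr sols Dex_entry w1_def w2_def w3_def w4_def)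
  have f47: "D1$(2,3)$(1,3) = Dex$(2,3)$(1,3)" by (simp add: cr sols Dex_entry w1_def w2_def w3_def w4_def)
  have f48: "D1$(2,3)$(2,1) = Dex$(2,3)$(2,1)" by (simp add: cr sols Dex_entry w1_def w2_def w3_def w4_def)
  have f49: "D1$(2,3)$(2,2) = Dex$(2,3)$(2,2)" by (simp add: cr sols Dex_entry w1_def w2_def w3_def w4_def)
  have f50: "D1$(2,3)$(2,3) = Dex$(2,3)$(2,3)" by (simp add: cr sols Dex_entry w1_def w2_def w3_def w4_def)
  have f51: "D1$(2,3)$(3,1) = Dex$(2,3)$(3,1)" by (simp add: cr sols Dex_entry w1_def w2_def w3_def w4_def)
  have f52: "D1$(2,3)$(3,2) = Dex$(2,3)$(3,2)" by (simp add: cr sols Dex_entry w1_def w2_def w3_def w4_def)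
  have f53: "D1$(2,3)$(3,3) = Dex$(2,3)$(3,3)" by (simp add: cr sols Dex_entry w1_def w2_def w3_def w4_def)
  have f54: "D1$(3,1)$(1,1) = Dex$(3,1)$(1,1)" by (simp add: cr sols Dex_entry w1_def w2_def w3_def w4_def)
  have f55: "D1$(3,1)$(1,2) = Dex$(3,1)$(1,2)" by (simp add: cr sols Dex_entry w1_def w2_def w3_def w4_def)
  have f56: "D1$(3,1)$(1,3) = Dex$(3,1)$(1,3)" by (simp add: cr sols Dex_entry w1_def w2_def w3_def w4_def)
  have f57: "D1$(3,1)$(2,1) = Dex$(3,1)$(2,1)" by (simp add: cr sols Dex_entry w1_def w2_def w3_def w4_def)
  have f58: "D1$(3,1)$(2,2) = Dex$(3,1)$(2,2)" by (simp add: cr sols Dex_entry w1_def w2_def w3_def w4_def)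
  have f59: "D1$(3,1)$(2,3) = Dex$(3,1)$(2,3)" by (simp add: cr sols Dex_entry w1_def w2_def w3_def w4_def)
  have f60: "D1$(3,1)$(3,1) = Dex$(3,1)$(3,1)" by (simp add: cr sols Dex_entry w1_def w2_def w3_def w4_def)
  have f61: "D1$(3,1)$(3,2) = Dex$(3,1)$(3,2)" by (simp add: cr sols Dex_entry w1_def w2_def w3_def w4_def)
  have f62: "D1$(3,1)$(3,3) = Dex$(3,1)$(3,3)" by (simp add: cr sols Dex_entry w1_def w2_def w3_def w4_def)
  have f63: "D1$(3,2)$(1,1) = Dex$(3,2)$(1,1)" by (simp add: cr sols Dex_entry w1_def w2_def w3_def w4_def)
  have f64: "D1$(3,2)$(1,2) = Dex$(3,2)$(1,2)" by (simp add: cr sols Dex_entry w1_def w2_def w3_def w4_def)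
  have f65: "D1$(3,2)$(1,3) = Dex$(3,2)$(1,3)" by (simp add: cr sols Dex_entry w1_def w2_def w3_def w4_def)
  have f66: "D1$(3,2)$(2,1) = Dex$(3,2)$(2,1)" by (simp add: cr sols Dex_entry w1_def w2_def w3_def w4_def)
  have f67: "D1$(3,2)$(2,2) = Dex$(3,2)$(2,2)" by (simp add: cr sols Dex_entry w1_def w2_def w3_def w4_def)
  have f68: "D1$(3,2)$(2,3) = Dex$(3,2)$(2,3)" by (simp add: cr sols Dex_entry w1_def w2_def w3_def w4_def)
  have f69: "D1$(3,2)$(3,1) = Dex$(3,2)$(3,1)" by (simp add: cr sols Dex_entry w1_def w2_def w3_def w4_def)
  have f70: "D1$(3,2)$(3,2) = Dex$(3,2)$(3,2)" by (simp add: cr sols Dex_entry w1_def w2_def w3_def w4_def)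
  have f71: "D1$(3,2)$(3,3) = Dex$(3,2)$(3,3)" by (simp add: cr sols Dex_entry w1_def w2_def w3_def w4_def)
  have f72: "D1$(3,3)$(1,1) = Dex$(3,3)$(1,1)" by (simp add: cr sols Dex_entry w1_def w2_def w3_def w4_def)
  have f73: "D1$(3,3)$(1,2) = Dex$(3,3)$(1,2)" by (simp add: cr sols Dex_entry w1_def w2_def w3_def w4_def)
  have f74: "D1$(3,3)$(1,3) = Dex$(3,3)$(1,3)" by (simp add: cr sols Dex_entry w1_def w2_def w3_def w4_def)
  have f75: "D1$(3,3)$(2,1) = Dex$(3,3)$(2,1)" by (simp add: cr sols Dex_entry w1_def w2_def w3_def w4_def)
  have f76: "D1$(3,3)$(2,2) = Dex$(3,3)$(2,2)" by (simp add: cr sols Dex_entry w1_def w2_def w3_def w4_def)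
  have f77: "D1$(3,3)$(2,3) = Dex$(3,3)$(2,3)" by (simp add: cr sols Dex_entry w1_def w2_def w3_def w4_def)
  have f78: "D1$(3,3)$(3,1) = Dex$(3,3)$(3,1)" by (simp add: cr sols Dex_entry w1_def w2_def w3_def w4_def)
  have f79: "D1$(3,3)$(3,2) = Dex$(3,3)$(3,2)" by (simp add: cr sols Dex_entry w1_def w2_def w3_def w4_def)
  have f80: "D1$(3,3)$(3,3) = Dex$(3,3)$(3,3)" by (simp add: cr sols Dex_entry w1_def w2_def w3_def w4_def)
  have "D1$p$q = Dex$p$q" for p q
  proof -
    obtain a b c d where p: "p = (a,b)" and q: "q = (c,d)" by (cases p, cases q) auto
    show ?thesis unfolding p q
      using exhaust_3[of a] exhaust_3[of b] exhaust_3[of c] exhaust_3[of d]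
      by (elim disjE) (simp_all only: f0 f1 f2 f3 f4 f5 f6 f7 f8 f9 f10 f11 f12 f13 f14 f15 f16 f17 f18 f19 f20 f21 f22 f23 f24 f25 f26 f27 f28 f29 f30 f31 f32 f33 f34 f35 f36 f37 f38 f39 f40 f41 f42 f43 f44 f45 f46 f47 f48 f49 f50 f51 f52 f53 f54 f55 f56 f57 f58 f59 f60 f61 f62 f63 f64 f65 f66 f67 f68 f69 f70 f71 f72 f73 f74 f75 f76 f77 f78 f79 f80)
  qed
  thus ?thesis by (simp add: vec_eq_iff)
qed

lemma Dex_extreme: "Dex extreme_point_of Gamma"
  unfolding extreme_point_of_def
proof (intro conjI ballI Dex_Gamma notI)
  fix D1 D2 assume G1: "D1 \<in> Gamma" and G2: "D2 \<in> Gamma" and seg: "Dex \<in> open_segment D1 D2"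
  obtain u where ne: "D1 \<noteq> D2" and u: "0 < u" "u < 1" and eq: "Dex = (1 - u) *\<^sub>R D1 + u *\<^sub>R D2"
    using seg by (auto simp: in_segment)
  have d1: "density_matrix D1" and d2: "density_matrix D2" using G1 G2 by (auto simp: Gamma_def)
  have eq2: "Dex = (1 - (1 - u)) *\<^sub>R D2 + (1 - u) *\<^sub>R D1" using eq by (simp add: add.commute)
  have u2: "0 \<le> 1 - u" "1 - u < 1" using u by auto
  have "D1 = Dex"
    by (rule Dex_unique[OF G1]; rule kernel_transfer[OF d1 d2 eq]; 
        (use u in simp)?; simp add: Dex_ker1 Dex_ker2 Dex_ker3 Dex_ker4 Dex_ker5)
  moreover have "D2 = Dex"
    by (rule Dex_unique[OF G2]; rule kernel_transfer[OF d2 d1 eq2];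
        (use u2 in simp)?; simp add: Dex_ker1 Dex_ker2 Dex_ker3 Dex_ker4 Dex_ker5)
  ultimately show False using ne by simp
qed

lemma Dex_rank_ge: "4 \<le> rank Dex"
proof -
  define S where "S = {row (1,1) Dex, row (1,3) Dex, row (2,1) Dex, row (2,3) Dex}"
  have rc: "row i Dex $ j = Dex $ i $ j" for i j by (simp add: row_def)
  have n1: "row (1,1) Dex \<noteq> row (1,3) Dex" "row (1,1) Dex \<noteq> row (2,1) Dex" "row (1,1) Dex \<noteq> row (2,3) Dex"
     "row (1,3) Dex \<noteq> row (2,1) Dex" "row (1,3) Dex \<noteq> row (2,3) Dex" "row (2,1) Dex \<noteq> row (2,3) Dex"
    by (auto simp: vec_eq_iff rc Dex_entry w1_def w2_def w3_def w4_def dest!: spec[of _ "(1,1)"] spec[of _ "(1,3)"] spec[of _ "(2,1)"])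
  have card: "card S = 4" using n1 by (simp add: S_def)
  have sub: "S \<subseteq> rows Dex" by (auto simp: S_def rows_def)
  have ind: "vec.independent S"
  proof -
    have "\<forall>v\<in>S. c v = 0" if sum0: "(\<Sum>v\<in>S. c v *s v) = 0" for c
    proof -
      have sx: "c (row (1,1) Dex) *s row (1,1) Dex + c (row (1,3) Dex) *s row (1,3) Dex
           + c (row (2,1) Dex) *s row (2,1) Dex + c (row (2,3) Dex) *s row (2,3) Dex = 0"
        using sum0 n1 by (simp add: S_def add.assoc)
      have e: "\<And>j. c (row (1,1) Dex) * Dex$(1,1)$j + c (row (1,3) Dex) * Dex$(1,3)$j
           + c (row (2,1) Dex) * Dex$(2,1)$j + c (row (2,3) Dex) * Dex$(2,3)$j = 0"
      proof -
        fix j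
        have "(c (row (1,1) Dex) *s row (1,1) Dex + c (row (1,3) Dex) *s row (1,3) Dex
           + c (row (2,1) Dex) *s row (2,1) Dex + c (row (2,3) Dex) *s row (2,3) Dex) $ j = 0"
          using sx by simp
        thus "c (row (1,1) Dex) * Dex$(1,1)$j + c (row (1,3) Dex) * Dex$(1,3)$j
           + c (row (2,1) Dex) * Dex$(2,1)$j + c (row (2,3) Dex) * Dex$(2,3)$j = 0"
          by (simp only: vector_add_component vector_smult_component rc)
      qed
      have a: "c (row (1,1) Dex) = 0" using e[of "(3,3)"] by (simp add: Dex_entry w1_def w2_def w3_def w4_def)
      have b: "c (row (1,3) Dex) = 0" using e[of "(1,3)"] by (simp add: Dex_entry w1_def w2_def w3_def w4_def)
      have d: "c (row (2,1) Dex) = 0" using e[of "(2,1)"] by (simp add: Dex_entry w1_def w2_def w3_def w4_def)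
      have f: "c (row (2,3) Dex) = 0" using e[of "(2,3)"] a by (simp add: Dex_entry w1_def w2_def w3_def w4_def)
      show ?thesis using a b d f by (simp add: S_def)
    qed
    moreover have "finite S" by (simp add: S_def)
    ultimately show ?thesis using vec.dependent_finite by blast
  qed
  have "card S \<le> vec.dim (rows Dex)" by (rule vec.independent_card_le_dim[OF sub ind])
  thus ?thesis using card by (simp add: row_rank_def_gen)
qed

theorem theorem2p5:
  shows "(\<forall>D. D extreme_point_of (Gamma :: (complex^(3\<times>3)^(3\<times>3)) set) \<longrightarrow> rank D \<le> 4) \<and>
         (\<exists>D. D extreme_point_of (Gamma :: (complex^(3\<times>3)^(3\<times>3)) set) \<and> rank D = 4)"
proof
  show ub: "\<forall>D. D extreme_point_of (Gamma :: (complex^(3\<times>3)^(3\<times>3)) set) \<longrightarrow> rank D \<le> 4"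
  proof (intro allI impI)
    fix D :: "complex^(3\<times>3)^(3\<times>3)"
    assume ext: "D extreme_point_of Gamma"
    hence G: "D \<in> Gamma" by (simp add: extreme_point_of_def)
    show "rank D \<le> 4"
    proof (rule ccontr)
      assume "\<not> rank D \<le> 4"
      hence "rank D \<ge> 5" by simp
      from upper[OF G this] ext show False by simp
    qed
  qed
  show "\<exists>D. D extreme_point_of (Gamma :: (complex^(3\<times>3)^(3\<times>3)) set) \<and> rank D = 4"
    using Dex_extreme Dex_rank_ge ub by (intro exI[of _ Dex]) (auto intro: antisym)
qed


end
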